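(* Let $P^1,\dots,P^m\in\mathbb{R}^n$ ($m\ge2$) be in general position. For $k=0,1,\dots,m-2$ let $L_k=L(P^{k+1},\dots,P^m)$. Let $Q^0\in L_0$ be the equidistant point from $P^1,\dots,P^m$, and define recursively $Q^k=\pi(Q^{k-1}\,|\,L_k)$ for $k=1,\dots,m-2$. Let $\boldsymbol\lambda^k=(\lambda^k_1,\dots,\lambda^k_m)$ be the barycentric coordinate of $Q^k$ about $P^1,\dots,P^m$. Let $K\in\{0,1,\dots,m-2\}$ and assume: for every $k=0,1,\dots,K-1$, $\lambda^k_i=0$ for $i=1,\dots,k$, $\lambda^k_{k+1}<0$, and $\lambda^k_i>0$ for $i=k+2,\dots,m$; and $\lambda^K_i=0$ for $i=1,\dots,K$ and $\lambda^K_i>0$ for $i=K+1,\dots,m$. Then the center of the smallest enclosing circle of $P^1,\dots,P^m$ is $Q^\ast=Q^K$ and its radius is $d^\ast=d(P^{K+1},Q^K)$.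
   Context: $d$ is the Euclidean distance on $\mathbb{R}^n$. Points $P^1,\dots,P^m$ are in general position if $P^2-P^1,\dots,P^m-P^1$ are linearly independent. $L(S^1,\dots,S^r)$ denotes the affine subspace spanned by the points $S^1,\dots,S^r$ (all affine combinations). For $Q'\in\mathbb{R}^n$ and an affine subspace $L$, $\pi(Q'|L)$ is the orthogonal projection, i.e. the unique $Q\in L$ minimizing $d(Q,Q')$. The barycentric coordinate of $Q\in L(P^1,\dots,P^m)$ about $P^1,\dots,P^m$ is the unique $\boldsymbol\lambda\in\mathbb{R}^m$ with $\sum_i\lambda_i=1$ and $Q=\sum_i\lambda_iP^i$. The equidistant point is the unique $Q^0\in L(P^1,\dots,P^m)$ with $d(P^1,Q^0)=\dots=d(P^m,Q^0)$. The smallest enclosing circle of $P^1,\dots,P^m$ is the ball whose center $Q^\ast$ attains $\min_{Q\in\mathbb{R}^n}\max_{1\le i\le m}d(P^i,Q)$ and whose radius $d^\ast$ is this minimum value. *)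

theory Defs
  imports "HOL-Analysis.Analysis"
begin

text \<open>Points are indexed P 1, ..., P m, as functions nat => 'a with 'a a Euclidean space (R^n).\<close>

definition general_position :: "(nat \<Rightarrow> 'a::euclidean_space) \<Rightarrow> nat \<Rightarrow> bool" where
  "general_position P m \<longleftrightarrow>
     inj_on (\<lambda>i. P i - P 1) {2..m} \<and> independent ((\<lambda>i. P i - P 1) ` {2..m})"

definition Lspan :: "(nat \<Rightarrow> 'a::euclidean_space) \<Rightarrow> nat \<Rightarrow> nat \<Rightarrow> 'a set" where
  "Lspan P a m = affine hull (P ` {a..m})"

definition proj :: "'a::euclidean_space \<Rightarrow> 'a set \<Rightarrow> 'a" where
  "proj Q' L = (THE Q. Q \<in> L \<and> (\<forall>Y\<in>L. dist Q Q' \<le> dist Y Q'))"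

definition bary :: "(nat \<Rightarrow> 'a::euclidean_space) \<Rightarrow> nat \<Rightarrow> 'a \<Rightarrow> (nat \<Rightarrow> real)" where
  "bary P m Q = (THE lam. (\<Sum>i=1..m. lam i) = 1 \<and> Q = (\<Sum>i=1..m. lam i *\<^sub>R P i)
                      \<and> (\<forall>i. i \<notin> {1..m} \<longrightarrow> lam i = 0))"

definition equidistant_point :: "(nat \<Rightarrow> 'a::euclidean_space) \<Rightarrow> nat \<Rightarrow> 'a" where
  "equidistant_point P m = (THE Q. Q \<in> Lspan P 1 m \<and> (\<forall>i\<in>{1..m}. dist (P i) Q = dist (P 1) Q))"

fun Qseq :: "(nat \<Rightarrow> 'a::euclidean_space) \<Rightarrow> nat \<Rightarrow> nat \<Rightarrow> 'a" where
  "Qseq P m 0 = equidistant_point P m"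
| "Qseq P m (Suc k) = proj (Qseq P m k) (Lspan P (Suc k + 1) m)"

definition enclosing_radius :: "(nat \<Rightarrow> 'a::metric_space) \<Rightarrow> nat \<Rightarrow> 'a \<Rightarrow> real" where
  "enclosing_radius P m Q = Max ((\<lambda>i. dist (P i) Q) ` {1..m})"

definition sec_center :: "(nat \<Rightarrow> 'a::metric_space) \<Rightarrow> nat \<Rightarrow> 'a" where
  "sec_center P m = (THE Q. \<forall>Q'. enclosing_radius P m Q \<le> enclosing_radius P m Q')"

definition sec_radius :: "(nat \<Rightarrow> 'a::metric_space) \<Rightarrow> nat \<Rightarrow> real" where
  "sec_radius P m = (INF Q. enclosing_radius P m Q)"

end

theory Submission
  imports Defs
begin

lemma orth_aux:
  fixes a b :: "'a::real_inner"
  assumes "\<And>t::real. a \<bullet> a \<le> (a - t *\<^sub>R b) \<bullet> (a - t *\<^sub>R b)"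
  shows "a \<bullet> b = 0"
proof (cases "b = 0")
  case True then show ?thesis by simp
next
  case False
  hence bb: "b \<bullet> b > 0" by simp
  define t where "t = (a \<bullet> b) / (b \<bullet> b)"
  have "a \<bullet> a \<le> (a - t *\<^sub>R b) \<bullet> (a - t *\<^sub>R b)" by (rule assms)
  also have "\<dots> = a \<bullet> a - 2 * t * (a \<bullet> b) + t * t * (b \<bullet> b)"
    by (simp add: inner_diff_left inner_diff_right inner_commute algebra_simps)
  also have "\<dots> = a \<bullet> a - (a \<bullet> b) * (a \<bullet> b) / (b \<bullet> b)"
    using bb by (simp add: t_def field_simps power2_eq_square)
  finally have "(a \<bullet> b) * (a \<bullet> b) / (b \<bullet> b) \<le> 0" by simp
  hence "(a \<bullet> b) * (a \<bullet> b) \<le> 0" using bb by (simp add: divide_le_0_iff)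
  thus ?thesis by (metis mult_eq_0_iff not_square_less_zero order_antisym_conv mult_nonneg_nonpos zero_le_square)
qed

lemma affine_min_orth:
  fixes Q Q' Y :: "'a::euclidean_space"
  assumes "affine L" "Q \<in> L" "Y \<in> L" "\<forall>Z\<in>L. dist Q Q' \<le> dist Z Q'"
  shows "(Q' - Q) \<bullet> (Y - Q) = 0"
proof (rule orth_aux)
  fix t :: real
  have "(1 - t) *\<^sub>R Q + t *\<^sub>R Y \<in> L" using assms(1-3) unfolding affine_def by auto
  hence "dist Q Q' \<le> dist ((1 - t) *\<^sub>R Q + t *\<^sub>R Y) Q'" using assms(4) by blast
  hence "(dist Q Q')^2 \<le> (dist ((1 - t) *\<^sub>R Q + t *\<^sub>R Y) Q')^2" by (simp add: power_mono)
  moreover have "(1 - t) *\<^sub>R Q + t *\<^sub>R Y - Q' = - ((Q' - Q) - t *\<^sub>R (Y - Q))"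
    by (simp add: algebra_simps)
  moreover have "(Q - Q') \<bullet> (Q - Q') = (Q' - Q) \<bullet> (Q' - Q)"
    by (metis inner_minus_left inner_minus_right minus_diff_eq minus_minus)
  ultimately show "(Q' - Q) \<bullet> (Q' - Q) \<le> ((Q' - Q) - t *\<^sub>R (Y - Q)) \<bullet> ((Q' - Q) - t *\<^sub>R (Y - Q))"
    by (simp add: dist_norm power2_norm_eq_inner norm_minus_commute)
qed

lemma proj_props:
  fixes Q' :: "'a::euclidean_space"
  assumes "affine L" "closed L" "L \<noteq> {}"
  shows "proj Q' L \<in> L" "\<forall>Z\<in>L. dist (proj Q' L) Q' \<le> dist Z Q'"
proof -
  have c: "convex L" using assms(1) affine_imp_convex by blast
  let ?c = "closest_point L Q'"
  have ex: "?c \<in> L \<and> (\<forall>Y\<in>L. dist ?c Q' \<le> dist Y Q')"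
    using closest_point_exists[OF assms(2,3), of Q'] by (simp add: dist_commute)
  have "\<And>Q. Q \<in> L \<and> (\<forall>Y\<in>L. dist Q Q' \<le> dist Y Q') \<Longrightarrow> Q = ?c"
    using closest_point_unique[OF c assms(2)] by (simp add: dist_commute)
  hence "proj Q' L = ?c" unfolding proj_def using ex by (rule the_equality[rotated]) 
  thus "proj Q' L \<in> L" "\<forall>Z\<in>L. dist (proj Q' L) Q' \<le> dist Z Q'" using ex by auto
qed

definition affc :: "(nat \<Rightarrow> 'a::euclidean_space) \<Rightarrow> nat \<Rightarrow> nat \<Rightarrow> 'a set" where
  "affc P a m = {Q. \<exists>l. sum l {a..m} = 1 \<and> Q = (\<Sum>i=a..m. l i *\<^sub>R P i) \<and> (\<forall>i. i \<notin> {a..m} \<longrightarrow> l i = 0)}"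

lemma affine_affc: "affine (affc P a m)"
  unfolding affine_def affc_def
proof (clarify)
  fix l l' :: "nat \<Rightarrow> real" and u v :: real
  assume h: "sum l {a..m} = 1" "\<forall>i. i \<notin> {a..m} \<longrightarrow> l i = 0"
    "sum l' {a..m} = 1" "\<forall>i. i \<notin> {a..m} \<longrightarrow> l' i = 0" "u + v = 1"
  let ?l = "\<lambda>i. u * l i + v * l' i"
  have "sum ?l {a..m} = 1" using h by (simp add: sum.distrib sum_distrib_left[symmetric])
  moreover have "u *\<^sub>R (\<Sum>i=a..m. l i *\<^sub>R P i) + v *\<^sub>R (\<Sum>i=a..m. l' i *\<^sub>R P i) = (\<Sum>i=a..m. ?l i *\<^sub>R P i)"
    by (simp add: scaleR_sum_right sum.distrib scaleR_add_left)
  moreover have "\<forall>i. i \<notin> {a..m} \<longrightarrow> ?l i = 0" using h by simp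
  ultimately show "\<exists>la. sum la {a..m} = 1 \<and>
              u *\<^sub>R (\<Sum>i = a..m. l i *\<^sub>R P i) + v *\<^sub>R (\<Sum>i = a..m. l' i *\<^sub>R P i) = (\<Sum>i = a..m. la i *\<^sub>R P i) \<and>
              (\<forall>i. i \<notin> {a..m} \<longrightarrow> la i = 0)" by metis
qed

lemma Lspan_affc: "Lspan P a m \<subseteq> affc P a m"
proof -
  have "P ` {a..m} \<subseteq> affc P a m"
  proof
    fix x assume "x \<in> P ` {a..m}"
    then obtain j where j: "j \<in> {a..m}" "x = P j" by auto
    let ?l = "\<lambda>i. if i = j then 1 else (0::real)"
    have "sum ?l {a..m} = 1" using j by simp
    have "(\<Sum>i=a..m. ?l i *\<^sub>R P i) = (\<Sum>i=a..m. if i = j then P i else 0)"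
      by (rule sum.cong) auto
    also have "\<dots> = P j" using j by (simp add: sum.delta)
    finally have "(\<Sum>i=a..m. ?l i *\<^sub>R P i) = P j" .
    moreover note \<open>sum ?l {a..m} = 1\<close>
    ultimately show "x \<in> affc P a m" unfolding affc_def mem_Collect_eq
      by (intro exI[of _ ?l]) (use j in auto)
  qed
  thus ?thesis unfolding Lspan_def using affine_affc by (rule hull_minimal)
qed

lemma bary_unique_aux:
  fixes P :: "nat \<Rightarrow> 'a::euclidean_space"
  assumes gp: "general_position P m" and s: "sum d {1..m} = 0" and z: "(\<Sum>i=1..m. d i *\<^sub>R P i) = 0"
  shows "\<forall>i\<in>{1..m}. d i = 0"
proof (cases "m \<ge> 1")
  case False then show ?thesis by auto
next
  case True
  let ?u = "\<lambda>i. P i - P 1"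
  have inj: "inj_on ?u {2..m}" and ind: "independent (?u ` {2..m})"
    using gp unfolding general_position_def by auto
  have "(\<Sum>i=1..m. d i *\<^sub>R ?u i) = (\<Sum>i=1..m. d i *\<^sub>R P i) - (\<Sum>i=1..m. d i) *\<^sub>R P 1"
    by (simp add: scaleR_diff_right sum_subtractf scaleR_sum_left)
  also have "\<dots> = 0" using s z by simp
  finally have "(\<Sum>i=1..m. d i *\<^sub>R ?u i) = 0" .
  moreover have "(\<Sum>i=1..m. d i *\<^sub>R ?u i) = (\<Sum>i=2..m. d i *\<^sub>R ?u i)"
    using True by (simp add: sum.atLeast_Suc_atMost numeral_2_eq_2)
  ultimately have z2: "(\<Sum>i=2..m. d i *\<^sub>R ?u i) = 0" by simp
  let ?c = "\<lambda>v. d (the_inv_into {2..m} ?u v)"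
  have "(\<Sum>v\<in>?u ` {2..m}. ?c v *\<^sub>R v) = (\<Sum>i=2..m. ?c (?u i) *\<^sub>R ?u i)"
    by (rule sum.reindex[OF inj, unfolded comp_def])
  also have "\<dots> = (\<Sum>i=2..m. d i *\<^sub>R ?u i)"
  proof (rule sum.cong[OF refl])
    fix i assume "i \<in> {2..m}"
    thus "?c (?u i) *\<^sub>R ?u i = d i *\<^sub>R ?u i" using the_inv_into_f_f[OF inj] by simp
  qed
  finally have "(\<Sum>v\<in>?u ` {2..m}. ?c v *\<^sub>R v) = 0" using z2 by simp
  hence c0: "\<forall>v\<in>?u ` {2..m}. ?c v = 0" using ind dependent_finite[of "?u ` {2..m}"] by auto
  have d2: "\<forall>i\<in>{2..m}. d i = 0"
  proof
    fix i assume i: "i \<in> {2..m}"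
    have "?c (?u i) = 0" using c0 i by blast
    thus "d i = 0" using the_inv_into_f_f[OF inj i] by simp
  qed
  have "sum d {1..m} = d 1 + sum d {2..m}"
    using True by (simp add: sum.atLeast_Suc_atMost numeral_2_eq_2)
  hence "d 1 = 0" using s d2 by simp
  show ?thesis
  proof
    fix i assume "i \<in> {1..m}"
    hence "i = 1 \<or> i \<in> {2..m}" by auto
    thus "d i = 0" using d2 \<open>d 1 = 0\<close> by auto
  qed
qed

lemma bary_props:
  fixes P :: "nat \<Rightarrow> 'a::euclidean_space"
  assumes gp: "general_position P m" and Q: "Q \<in> Lspan P 1 m"
  shows "sum (bary P m Q) {1..m} = 1" "Q = (\<Sum>i=1..m. bary P m Q i *\<^sub>R P i)"
    "\<forall>i. i \<notin> {1..m} \<longrightarrow> bary P m Q i = 0"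
proof -
  let ?R = "\<lambda>lam. (\<Sum>i=1..m. lam i) = 1 \<and> Q = (\<Sum>i=1..m. lam i *\<^sub>R P i) \<and> (\<forall>i. i \<notin> {1..m} \<longrightarrow> lam i = 0)"
  obtain l where l: "?R l" using Q Lspan_affc[of P 1 m] unfolding affc_def by blast
  have u: "\<And>l'. ?R l' \<Longrightarrow> l' = l"
  proof
    fix l' i assume R': "?R l'"
    have "sum (\<lambda>i. l' i - l i) {1..m} = 0" using R' l by (simp add: sum_subtractf)
    moreover have "(\<Sum>i=1..m. (l' i - l i) *\<^sub>R P i) = 0"
      using R' l by (simp add: scaleR_diff_left sum_subtractf)
    ultimately have "\<forall>i\<in>{1..m}. l' i - l i = 0" by (rule bary_unique_aux[OF gp])
    show "l' i = l i"
    proof (cases "i \<in> {1..m}")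
      case True thus ?thesis using \<open>\<forall>i\<in>{1..m}. l' i - l i = 0\<close> by simp
    next
      case False thus ?thesis using R' l by simp
    qed
  qed
  have "bary P m Q = l" unfolding bary_def using l u by (rule the_equality)
  thus "sum (bary P m Q) {1..m} = 1" "Q = (\<Sum>i=1..m. bary P m Q i *\<^sub>R P i)"
    "\<forall>i. i \<notin> {1..m} \<longrightarrow> bary P m Q i = 0" using l by auto
qed

lemma dist_eq_inner:
  fixes x y Q :: "'a::euclidean_space"
  shows "dist x Q = dist y Q \<longleftrightarrow> x \<bullet> x - 2 * (x \<bullet> Q) = y \<bullet> y - 2 * (y \<bullet> Q)"
proof -
  have "dist x Q = dist y Q \<longleftrightarrow> (dist x Q)^2 = (dist y Q)^2" by simp
  also have "\<dots> \<longleftrightarrow> (x - Q) \<bullet> (x - Q) = (y - Q) \<bullet> (y - Q)"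
    by (simp add: dist_norm power2_norm_eq_inner)
  also have "\<dots> \<longleftrightarrow> x \<bullet> x - 2 * (x \<bullet> Q) = y \<bullet> y - 2 * (y \<bullet> Q)"
    by (simp add: inner_diff_left inner_diff_right inner_commute)
  finally show ?thesis .
qed

lemma riesz_aux:
  fixes g :: "'a::euclidean_space \<Rightarrow> real"
  assumes "linear g"
  shows "\<exists>w. \<forall>x. g x = x \<bullet> w"
proof -
  let ?w = "\<Sum>b\<in>Basis. g b *\<^sub>R b"
  have "g x = x \<bullet> ?w" for x
  proof -
    have "g x = g (\<Sum>b\<in>Basis. (x \<bullet> b) *\<^sub>R b)" by (simp add: euclidean_representation)
    also have "\<dots> = (\<Sum>b\<in>Basis. (x \<bullet> b) * g b)"
      using assms by (simp add: linear_sum linear_scale)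
    also have "\<dots> = x \<bullet> ?w" by (simp add: inner_sum_right mult.commute)
    finally show ?thesis .
  qed
  thus ?thesis by blast
qed

lemma equi_exists:
  fixes P :: "nat \<Rightarrow> 'a::euclidean_space"
  assumes gp: "general_position P m" and m: "m \<ge> 1"
  shows "\<exists>Q. Q \<in> Lspan P 1 m \<and> (\<forall>i\<in>{1..m}. dist (P i) Q = dist (P 1) Q)"
proof -
  let ?u = "\<lambda>i. P i - P 1"
  let ?U = "?u ` {2..m}"
  have ind: "independent ?U" using gp unfolding general_position_def by auto
  obtain g :: "'a \<Rightarrow> real" where g: "linear g" "\<forall>x\<in>?U. g x = (x \<bullet> x) / 2"
    using linear_independent_extend[OF ind, where f="\<lambda>x. (x \<bullet> x) / 2"] by auto
  obtain w where w: "\<forall>x. g x = x \<bullet> w" using riesz_aux[OF g(1)] by blast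
  let ?S = "span ?U"
  have sS: "subspace ?S" by simp
  have aS: "affine ?S" by (rule subspace_imp_affine[OF sS])
  have cS: "closed ?S" by (rule closed_subspace[OF sS])
  have nS: "?S \<noteq> {}" using span_zero by blast
  define v where "v = proj w ?S"
  have vS: "v \<in> ?S" and vmin: "\<forall>Z\<in>?S. dist v w \<le> dist Z w"
    using proj_props[OF aS cS nS, of w] unfolding v_def by auto
  have uv: "?u i \<bullet> v = (?u i \<bullet> ?u i) / 2" if i: "i \<in> {2..m}" for i
  proof -
    have uS: "?u i \<in> ?S" using i by (intro span_base) auto
    have "v + ?u i \<in> ?S" using vS uS by (rule span_add)
    hence "(w - v) \<bullet> ((v + ?u i) - v) = 0" by (rule affine_min_orth[OF aS vS _ vmin])
    hence "?u i \<bullet> v = ?u i \<bullet> w" by (simp add: inner_diff_left inner_commute)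
    also have "\<dots> = g (?u i)" using w by (simp add: inner_commute)
    also have "\<dots> = (?u i \<bullet> ?u i) / 2" using g(2) i by auto
    finally show ?thesis .
  qed
  define Q where "Q = P 1 + v"
  let ?A = "Lspan P 1 m"
  have aA: "affine ?A" unfolding Lspan_def by simp
  have P1: "P 1 \<in> ?A" unfolding Lspan_def using m by (intro hull_inc) auto
  have sub: "subspace ((\<lambda>x. (- P 1) + x) ` ?A)" by (rule affine_diffs_subspace[OF aA P1])
  have "?U \<subseteq> (\<lambda>x. (- P 1) + x) ` ?A"
  proof
    fix x assume "x \<in> ?U"
    then obtain i where i: "i \<in> {2..m}" "x = ?u i" by auto
    have "P i \<in> ?A" unfolding Lspan_def using i by (intro hull_inc) auto
    thus "x \<in> (\<lambda>x. (- P 1) + x) ` ?A" using i by (intro image_eqI[of _ _ "P i"]) auto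
  qed
  hence "?S \<subseteq> (\<lambda>x. (- P 1) + x) ` ?A" using sub by (rule span_minimal)
  hence "v \<in> (\<lambda>x. (- P 1) + x) ` ?A" using vS by blast
  then obtain x where "x \<in> ?A" "v = - P 1 + x" by blast
  hence "Q \<in> ?A" unfolding Q_def by simp
  moreover have "\<forall>i\<in>{1..m}. dist (P i) Q = dist (P 1) Q"
  proof
    fix i assume i: "i \<in> {1..m}"
    show "dist (P i) Q = dist (P 1) Q"
    proof (cases "i = 1")
      case True thus ?thesis by simp
    next
      case False
      hence i2: "i \<in> {2..m}" using i by auto
      have "dist (P i) Q = norm (?u i - v)" unfolding Q_def dist_norm by (simp add: algebra_simps)
      moreover have "dist (P 1) Q = norm v" unfolding Q_def dist_norm by simp
      moreover have "(norm (?u i - v))^2 = (norm v)^2"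
        using uv[OF i2] by (simp add: power2_norm_eq_inner inner_diff_left inner_diff_right inner_commute)
      ultimately show ?thesis by (metis norm_ge_zero power2_eq_iff_nonneg)
    qed
  qed
  ultimately show ?thesis by blast
qed

lemma equi_props:
  fixes P :: "nat \<Rightarrow> 'a::euclidean_space"
  assumes gp: "general_position P m" and m: "m \<ge> 1"
  shows "equidistant_point P m \<in> Lspan P 1 m \<and> (\<forall>i\<in>{1..m}. dist (P i) (equidistant_point P m) = dist (P 1) (equidistant_point P m))"
  unfolding equidistant_point_def
proof (rule theI')
  let ?R = "\<lambda>Q. Q \<in> Lspan P 1 m \<and> (\<forall>i\<in>{1..m}. dist (P i) Q = dist (P 1) Q)"
  show "\<exists>!Q. ?R Q"
  proof (rule ex_ex1I)
    show "\<exists>Q. ?R Q" by (rule equi_exists[OF gp m])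
  next
    fix Q Q' assume R: "?R Q" "?R Q'"
    have "Q \<in> affc P 1 m" using R(1) Lspan_affc[of P 1 m] by blast
    then obtain l where l: "sum l {1..m} = 1" "Q = (\<Sum>i=1..m. l i *\<^sub>R P i)"
      unfolding affc_def mem_Collect_eq by blast
    have "Q' \<in> affc P 1 m" using R(2) Lspan_affc[of P 1 m] by blast
    then obtain l' where l': "sum l' {1..m} = 1" "Q' = (\<Sum>i=1..m. l' i *\<^sub>R P i)"
      unfolding affc_def mem_Collect_eq by blast
    have e: "P i \<bullet> (Q - Q') = P 1 \<bullet> (Q - Q')" if i: "i \<in> {1..m}" for i
    proof -
      have "dist (P i) Q = dist (P 1) Q" using R(1) i by blast
      hence "P i \<bullet> P i - 2 * (P i \<bullet> Q) = P 1 \<bullet> P 1 - 2 * (P 1 \<bullet> Q)"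
        by (simp only: dist_eq_inner)
      moreover have "dist (P i) Q' = dist (P 1) Q'" using R(2) i by blast
      hence "P i \<bullet> P i - 2 * (P i \<bullet> Q') = P 1 \<bullet> P 1 - 2 * (P 1 \<bullet> Q')"
        by (simp only: dist_eq_inner)
      ultimately show ?thesis by (simp add: inner_diff_right)
    qed
    have "Q - Q' = (\<Sum>i=1..m. (l i - l' i) *\<^sub>R P i)"
      unfolding l(2) l'(2) by (simp add: scaleR_diff_left sum_subtractf)
    hence "(Q - Q') \<bullet> (Q - Q') = (\<Sum>i=1..m. (l i - l' i) *\<^sub>R P i) \<bullet> (Q - Q')" by simp
    also have "\<dots> = (\<Sum>i=1..m. (l i - l' i) * (P i \<bullet> (Q - Q')))"
      by (simp add: inner_sum_left)
    also have "\<dots> = (\<Sum>i=1..m. (l i - l' i) * (P 1 \<bullet> (Q - Q')))"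
    proof (rule sum.cong[OF refl])
      fix i assume i: "i \<in> {1..m}"
      show "(l i - l' i) * (P i \<bullet> (Q - Q')) = (l i - l' i) * (P 1 \<bullet> (Q - Q'))"
        by (simp only: e[OF i])
    qed
    also have "\<dots> = (\<Sum>i=1..m. (l i - l' i)) * (P 1 \<bullet> (Q - Q'))"
      by (rule sum_distrib_right[symmetric])
    also have "\<dots> = 0" using l(1) l'(1) by (simp add: sum_subtractf)
    finally have "(Q - Q') \<bullet> (Q - Q') = 0" .
    thus "Q = Q'" by (metis inner_eq_zero_iff eq_iff_diff_eq_0)
  qed
qed


lemma pyth:
  fixes a q y :: "'a::euclidean_space"
  assumes "(a - q) \<bullet> (y - q) = 0"
  shows "(dist y a)^2 = (dist y q)^2 + (dist q a)^2"
proof -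
  have e: "y - a = (y - q) + (q - a)" by simp
  have "(dist y a)^2 = (y - a) \<bullet> (y - a)" by (simp add: dist_norm power2_norm_eq_inner)
  also have "\<dots> = ((y - q) + (q - a)) \<bullet> ((y - q) + (q - a))" by (simp only: e)
  also have "\<dots> = (y - q) \<bullet> (y - q) + 2 * ((y - q) \<bullet> (q - a)) + (q - a) \<bullet> (q - a)"
    by (simp only: inner_add_left inner_add_right inner_commute[of "q - a" "y - q"])
  also have "(y - q) \<bullet> (q - a) = 0"
    using assms by (metis inner_commute inner_minus_right minus_diff_eq neg_equal_0_iff_equal)
  finally show ?thesis by (simp add: dist_norm power2_norm_eq_inner)
qed

lemma Lspan_mono: "1 \<le> a \<Longrightarrow> Lspan P a m \<subseteq> Lspan P 1 m"
  unfolding Lspan_def by (intro hull_mono image_mono) auto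

lemma Qseq_props:
  fixes P :: "nat \<Rightarrow> 'a::euclidean_space"
  assumes gp: "general_position P m" and m: "m \<ge> 2"
  shows "k + 1 \<le> m \<Longrightarrow> Qseq P m k \<in> Lspan P (k+1) m \<and>
     (\<forall>i\<in>{k+1..m}. dist (P i) (Qseq P m k) = dist (P m) (Qseq P m k))"
proof (induction k)
  case 0
  have "m \<ge> 1" using m by simp
  note E = equi_props[OF gp this]
  let ?E = "equidistant_point P m"
  have E1: "?E \<in> Lspan P 1 m" using E by (rule conjunct1)
  have E2: "\<forall>i\<in>{1..m}. dist (P i) ?E = dist (P 1) ?E" using E by (rule conjunct2)
  have "\<forall>i\<in>{0+1..m}. dist (P i) ?E = dist (P m) ?E"
  proof
    fix i assume "i \<in> {0+1..m}"
    hence "i \<in> {1..m}" by simp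
    hence a: "dist (P i) ?E = dist (P 1) ?E" by (rule E2[rule_format])
    have "m \<in> {1..m}" using m by simp
    hence b: "dist (P m) ?E = dist (P 1) ?E" by (rule E2[rule_format])
    show "dist (P i) ?E = dist (P m) ?E" by (simp only: a b)
  qed
  note EQ = this
  show ?case unfolding Qseq.simps(1)
  proof (rule conjI)
    show "?E \<in> Lspan P (0+1) m" using E1 by simp
  qed (rule EQ)
next
  case (Suc k)
  have km: "k + 1 \<le> m" using Suc.prems by linarith
  note IH0 = Suc.IH[OF km]
  have IH: "Qseq P m k \<in> Lspan P (k+1) m"
    "\<forall>i\<in>{k+1..m}. dist (P i) (Qseq P m k) = dist (P m) (Qseq P m k)"
    using IH0 by (rule conjunct1, rule conjunct2)
  let ?L = "Lspan P (Suc k + 1) m"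
  let ?A = "Qseq P m k"
  let ?B = "Qseq P m (Suc k)"
  have aL: "affine ?L" unfolding Lspan_def by simp
  have cL: "closed ?L" unfolding Lspan_def by simp
  have Pi: "P i \<in> ?L" if "i \<in> {Suc k + 1..m}" for i
    unfolding Lspan_def using that by (intro hull_inc) auto
  have nL: "?L \<noteq> {}" using Pi[of m] Suc.prems by auto
  have B: "?B = proj ?A ?L" by (simp only: Qseq.simps)
  have BL: "?B \<in> ?L" and Bmin: "\<forall>Z\<in>?L. dist ?B ?A \<le> dist Z ?A"
    using proj_props[OF aL cL nL, of ?A] B by auto
  have d: "(dist (P i) ?A)^2 = (dist (P i) ?B)^2 + (dist ?B ?A)^2" if i: "i \<in> {Suc k + 1..m}" for i
    by (rule pyth[OF affine_min_orth[OF aL BL Pi[OF i] Bmin]])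
  have "\<forall>i\<in>{Suc k+1..m}. dist (P i) ?B = dist (P m) ?B"
  proof
    fix i assume i: "i \<in> {Suc k+1..m}"
    have im: "m \<in> {Suc k+1..m}" using Suc.prems by auto
    have "i \<in> {k+1..m}" using i by auto
    hence "dist (P i) ?A = dist (P m) ?A" by (rule IH(2)[rule_format])
    hence "(dist (P i) ?A)^2 = (dist (P m) ?A)^2" by (rule arg_cong)
    hence "(dist (P i) ?B)^2 = (dist (P m) ?B)^2" using d[OF i] d[OF im] by linarith
    thus "dist (P i) ?B = dist (P m) ?B" by (simp add: power2_eq_iff_nonneg)
  qed
  thus ?case using BL by blast
qed

lemma bary_ident:
  fixes P :: "nat \<Rightarrow> 'a::euclidean_space"
  assumes s: "sum mu {1..m} = 1" and X: "X = (\<Sum>i=1..m. mu i *\<^sub>R P i)"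
  shows "(\<Sum>i=1..m. mu i * (dist (P i) Y)^2) = (\<Sum>i=1..m. mu i * (dist (P i) X)^2) + (dist X Y)^2"
proof -
  have h: "(dist (P i) Y)^2 = (dist (P i) X)^2 + 2 * ((P i - X) \<bullet> (X - Y)) + (dist X Y)^2" for i
  proof -
    have e: "P i - Y = (P i - X) + (X - Y)" by simp
    have "(dist (P i) Y)^2 = (P i - Y) \<bullet> (P i - Y)" by (simp add: dist_norm power2_norm_eq_inner)
    also have "\<dots> = ((P i - X) + (X - Y)) \<bullet> ((P i - X) + (X - Y))" by (simp only: e)
    also have "\<dots> = (P i - X) \<bullet> (P i - X) + 2 * ((P i - X) \<bullet> (X - Y)) + (X - Y) \<bullet> (X - Y)"
      by (simp only: inner_add_left inner_add_right inner_commute[of "X - Y" "P i - X"])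
    finally show ?thesis by (simp add: dist_norm power2_norm_eq_inner)
  qed
  have z: "(\<Sum>i=1..m. mu i * ((P i - X) \<bullet> (X - Y))) = 0"
  proof -
    have "(\<Sum>i=1..m. mu i * ((P i - X) \<bullet> (X - Y))) = (\<Sum>i=1..m. mu i *\<^sub>R (P i - X)) \<bullet> (X - Y)"
      by (simp add: inner_sum_left)
    also have "(\<Sum>i=1..m. mu i *\<^sub>R (P i - X)) = (\<Sum>i=1..m. mu i *\<^sub>R P i) - (\<Sum>i=1..m. mu i) *\<^sub>R X"
      by (simp add: scaleR_diff_right sum_subtractf scaleR_sum_left)
    also have "\<dots> = 0" using s X by simp
    finally show ?thesis by simp
  qed
  have "(\<Sum>i=1..m. mu i * (dist (P i) Y)^2)
      = (\<Sum>i=1..m. mu i * (dist (P i) X)^2 + 2 * (mu i * ((P i - X) \<bullet> (X - Y))) + mu i * (dist X Y)^2)"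
    by (rule sum.cong[OF refl]) (simp only: h algebra_simps)
  also have "\<dots> = (\<Sum>i=1..m. mu i * (dist (P i) X)^2) + 2 * (\<Sum>i=1..m. mu i * ((P i - X) \<bullet> (X - Y)))
      + (\<Sum>i=1..m. mu i) * (dist X Y)^2"
    by (simp only: sum.distrib sum_distrib_left[symmetric] sum_distrib_right[symmetric])
  also have "\<dots> = (\<Sum>i=1..m. mu i * (dist (P i) X)^2) + (dist X Y)^2" by (simp only: z s)
  finally show ?thesis .
qed


theorem theorem2:
  fixes P :: "nat \<Rightarrow> 'a::euclidean_space" and m K :: nat
  assumes "m \<ge> 2"
    and "general_position P m"
    and "K \<le> m - 2"
    and "\<forall>k<K. (\<forall>i\<in>{1..k}. bary P m (Qseq P m k) i = 0)
               \<and> bary P m (Qseq P m k) (k + 1) < 0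
               \<and> (\<forall>i\<in>{k+2..m}. bary P m (Qseq P m k) i > 0)"
    and "\<forall>i\<in>{1..K}. bary P m (Qseq P m K) i = 0"
    and "\<forall>i\<in>{K+1..m}. bary P m (Qseq P m K) i > 0"
  shows "sec_center P m = Qseq P m K \<and> sec_radius P m = dist (P (K + 1)) (Qseq P m K)"
proof -
  note gp = assms(2) and m2 = assms(1)
  have K1: "K + 1 \<le> m" using assms(1,3) by linarith
  define C where "C = Qseq P m K"
  define lam where "lam = bary P m C"
  define r where "r = dist (P m) C"
  have r0: "r \<ge> 0" unfolding r_def by simp
  have QK: "C \<in> Lspan P (K+1) m \<and> (\<forall>i\<in>{K+1..m}. dist (P i) C = dist (P m) C)"
    unfolding C_def by (rule Qseq_props[OF gp m2 K1])
  have CL: "C \<in> Lspan P 1 m" using conjunct1[OF QK] Lspan_mono[of "K+1" P m] by auto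
  have eqK: "dist (P i) C = r" if "i \<in> {K+1..m}" for i
    unfolding r_def by (rule conjunct2[OF QK, rule_format, OF that])
  have ls1: "sum lam {1..m} = 1" and ls2: "C = (\<Sum>i=1..m. lam i *\<^sub>R P i)"
    using bary_props[OF gp CL] unfolding lam_def by auto
  have l0: "lam i = 0" if "i \<in> {1..K}" for i
    using assms(5) that unfolding lam_def C_def by blast
  have lpos: "lam i > 0" if "i \<in> {K+1..m}" for i
    using assms(6) that unfolding lam_def C_def by blast
  have lr: "lam i * (dist (P i) C)^2 = lam i * r^2" if i: "i \<in> {1..m}" for i
  proof (cases "i \<le> K")
    case True thus ?thesis using l0[of i] i by simp
  next
    case False hence "i \<in> {K+1..m}" using i by simp
    thus ?thesis using eqK[of i] by simp
  qed
  have keyA: "(\<Sum>i=1..m. lam i * (dist (P i) Y)^2) = r^2 + (dist C Y)^2" for Y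
  proof -
    have "(\<Sum>i=1..m. lam i * (dist (P i) Y)^2) = (\<Sum>i=1..m. lam i * (dist (P i) C)^2) + (dist C Y)^2"
      by (rule bary_ident[OF ls1 ls2])
    also have "(\<Sum>i=1..m. lam i * (dist (P i) C)^2) = (\<Sum>i=1..m. lam i * r^2)"
      by (rule sum.cong[OF refl]) (rule lr)
    also have "\<dots> = r^2" using ls1 by (simp add: sum_distrib_right[symmetric])
    finally show ?thesis .
  qed
  have upper: "dist (P j) C \<le> r" if "j \<in> {1..K}" for j
    using that
  proof (induction "K - j" arbitrary: j rule: less_induct)
    case less
    note jK = less.prems
    define k where "k = j - 1"
    have jk: "j = k + 1" and kK: "k < K" using jK unfolding k_def by auto
    have k1: "k + 1 \<le> m" using kK K1 by linarith
    define D where "D = Qseq P m k"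
    define mu where "mu = bary P m D"
    define rho where "rho = dist (P m) D"
    have QD: "D \<in> Lspan P (k+1) m \<and> (\<forall>i\<in>{k+1..m}. dist (P i) D = dist (P m) D)"
      unfolding D_def by (rule Qseq_props[OF gp m2 k1])
    have DL: "D \<in> Lspan P 1 m" using conjunct1[OF QD] Lspan_mono[of "k+1" P m] by auto
    have eqD: "dist (P i) D = rho" if "i \<in> {k+1..m}" for i
      unfolding rho_def by (rule conjunct2[OF QD, rule_format, OF that])
    have ms1: "sum mu {1..m} = 1" and ms2: "D = (\<Sum>i=1..m. mu i *\<^sub>R P i)"
      using bary_props[OF gp DL] unfolding mu_def by auto
    have hk: "(\<forall>i\<in>{1..k}. mu i = 0) \<and> mu (k + 1) < 0 \<and> (\<forall>i\<in>{k+2..m}. mu i > 0)"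
      using assms(4) kK unfolding mu_def D_def by blast
    have mu0: "mu i = 0" if "i \<in> {1..k}" for i using hk that by blast
    have muj: "mu j < 0" using hk jk by simp
    have mupos: "mu i > 0" if "i \<in> {k+2..m}" for i using hk that by blast
    have S1: "(\<Sum>i=1..m. mu i * (dist (P i) C)^2) = rho^2 + (dist D C)^2"
    proof -
      have "(\<Sum>i=1..m. mu i * (dist (P i) C)^2) = (\<Sum>i=1..m. mu i * (dist (P i) D)^2) + (dist D C)^2"
        by (rule bary_ident[OF ms1 ms2])
      also have "(\<Sum>i=1..m. mu i * (dist (P i) D)^2) = (\<Sum>i=1..m. mu i * rho^2)"
      proof (rule sum.cong[OF refl])
        fix i assume i: "i \<in> {1..m}"
        show "mu i * (dist (P i) D)^2 = mu i * rho^2"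
        proof (cases "i \<le> k")
          case True thus ?thesis using mu0[of i] i by simp
        next
          case False hence "i \<in> {k+1..m}" using i by simp
          thus ?thesis using eqD[of i] by simp
        qed
      qed
      also have "\<dots> = rho^2" using ms1 by (simp add: sum_distrib_right[symmetric])
      finally show ?thesis .
    qed
    have S2: "rho^2 = r^2 + (dist C D)^2"
    proof -
      have "(\<Sum>i=1..m. lam i * (dist (P i) D)^2) = (\<Sum>i=1..m. lam i * rho^2)"
      proof (rule sum.cong[OF refl])
        fix i assume i: "i \<in> {1..m}"
        show "lam i * (dist (P i) D)^2 = lam i * rho^2"
        proof (cases "i \<le> K")
          case True thus ?thesis using l0[of i] i by simp
        next
          case False hence "i \<in> {k+1..m}" using i kK by simp
          thus ?thesis using eqD[of i] by simp
        qed
      qed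
      also have "\<dots> = rho^2" using ls1 by (simp add: sum_distrib_right[symmetric])
      finally show ?thesis using keyA[of D] by simp
    qed
    have ge: "(\<Sum>i=1..m. mu i * ((dist (P i) C)^2 - r^2)) \<ge> 0"
    proof -
      have "(\<Sum>i=1..m. mu i * ((dist (P i) C)^2 - r^2)) = (\<Sum>i=1..m. mu i * (dist (P i) C)^2) - (\<Sum>i=1..m. mu i) * r^2"
        by (simp add: right_diff_distrib sum_subtractf sum_distrib_right)
      also have "\<dots> = rho^2 + (dist D C)^2 - r^2" using S1 ms1 by simp
      also have "\<dots> \<ge> 0" using S2 by (simp add: dist_commute)
      finally show ?thesis .
    qed
    let ?g = "\<lambda>i. mu i * ((dist (P i) C)^2 - r^2)"
    have jm: "j \<in> {1..m}" using jK K1 by auto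
    have split: "(\<Sum>i=1..m. ?g i) = ?g j + (\<Sum>i\<in>{1..m} - {j}. ?g i)"
      by (rule sum.remove[OF _ jm]) simp
    have rest: "(\<Sum>i\<in>{1..m} - {j}. ?g i) \<le> 0"
    proof (rule sum_nonpos)
      fix i assume i: "i \<in> {1..m} - {j}"
      show "?g i \<le> 0"
      proof (cases "i < j")
        case True
        hence "i \<in> {1..k}" using i jk by auto
        thus ?thesis using mu0[of i] by simp
      next
        case False
        hence ij: "i > j" using i by auto
        hence "i \<in> {k+2..m}" using i jk by auto
        hence mp: "mu i > 0" by (rule mupos)
        have "dist (P i) C \<le> r"
        proof (cases "i \<le> K")
          case True
          hence "K - i < K - j" using ij by linarith
          moreover have "i \<in> {1..K}" using True i by auto
          ultimately show ?thesis by (rule less.hyps)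
        next
          case False hence "i \<in> {K+1..m}" using i by auto
          thus ?thesis using eqK[of i] by simp
        qed
        hence "(dist (P i) C)^2 \<le> r^2" by (simp add: power_mono)
        thus ?thesis using mp by (simp add: mult_nonneg_nonpos)
      qed
    qed
    have "?g j \<ge> 0" using ge split rest by linarith
    hence "(dist (P j) C)^2 - r^2 \<le> 0" using muj
      by (metis mult_neg_pos not_le)
    hence "(dist (P j) C)^2 \<le> r^2" by simp
    thus ?case using r0 by (rule power2_le_imp_le)
  qed
  have allle: "dist (P i) C \<le> r" if i: "i \<in> {1..m}" for i
  proof (cases "i \<le> K")
    case True thus ?thesis using upper[of i] i by simp
  next
    case False hence "i \<in> {K+1..m}" using i by simp
    thus ?thesis using eqK[of i] by simp
  qed
  have mm: "m \<in> {1..m}" using m2 by simp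
  have fC: "enclosing_radius P m C = r"
    unfolding enclosing_radius_def
  proof (rule Max_eqI)
    show "finite ((\<lambda>i. dist (P i) C) ` {1..m})" by simp
    show "\<And>y. y \<in> (\<lambda>i. dist (P i) C) ` {1..m} \<Longrightarrow> y \<le> r" using allle by auto
    show "r \<in> (\<lambda>i. dist (P i) C) ` {1..m}" unfolding r_def using mm by (rule imageI)
  qed
  have lower: "r^2 + (dist C Y)^2 \<le> (enclosing_radius P m Y)^2" for Y
  proof -
    let ?M = "enclosing_radius P m Y"
    have le: "dist (P i) Y \<le> ?M" if "i \<in> {1..m}" for i
      unfolding enclosing_radius_def using that by (intro Max_ge) auto
    have M0: "?M \<ge> 0" using le[OF mm] zero_le_dist[of "P m" Y] by linarith
    have lnn: "lam i \<ge> 0" if i: "i \<in> {1..m}" for i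
    proof (cases "i \<le> K")
      case True thus ?thesis using l0[of i] i by simp
    next
      case False hence "i \<in> {K+1..m}" using i by simp
      thus ?thesis using lpos[of i] by simp
    qed
    have "r^2 + (dist C Y)^2 = (\<Sum>i=1..m. lam i * (dist (P i) Y)^2)" using keyA[of Y] by simp
    also have "\<dots> \<le> (\<Sum>i=1..m. lam i * ?M^2)"
    proof (rule sum_mono)
      fix i assume i: "i \<in> {1..m}"
      have "(dist (P i) Y)^2 \<le> ?M^2" using le[OF i] by (simp add: power_mono)
      thus "lam i * (dist (P i) Y)^2 \<le> lam i * ?M^2" using lnn[OF i] by (rule mult_left_mono)
    qed
    also have "\<dots> = ?M^2" using ls1 by (simp add: sum_distrib_right[symmetric])
    finally show ?thesis .
  qed
  have geR: "r \<le> enclosing_radius P m Y" for Y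
  proof -
    have M0: "enclosing_radius P m Y \<ge> 0"
      unfolding enclosing_radius_def using mm
      by (meson Max_ge finite_atLeastAtMost finite_imageI imageI order_trans zero_le_dist)
    have "r^2 \<le> (enclosing_radius P m Y)^2" using lower[of Y] by (smt (verit) zero_le_power2)
    thus ?thesis using M0 by (rule power2_le_imp_le)
  qed
  have center: "sec_center P m = C"
    unfolding sec_center_def
  proof (rule the_equality)
    show "\<forall>Q'. enclosing_radius P m C \<le> enclosing_radius P m Q'" using fC geR by simp
  next
    fix Q assume h: "\<forall>Q'. enclosing_radius P m Q \<le> enclosing_radius P m Q'"
    hence "enclosing_radius P m Q \<le> r" using fC by metis
    hence "enclosing_radius P m Q = r" using geR[of Q] by linarith
    hence "(dist C Q)^2 \<le> 0" using lower[of Q] by simp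
    thus "Q = C" by simp
  qed
  have radius: "sec_radius P m = r"
    unfolding sec_radius_def
  proof (rule cInf_eq_minimum)
    show "r \<in> range (enclosing_radius P m)" using fC by (metis rangeI)
    show "\<And>x. x \<in> range (enclosing_radius P m) \<Longrightarrow> r \<le> x" using geR by auto
  qed
  have "dist (P (K+1)) C = r" using K1 by (intro eqK) simp
  thus ?thesis using center radius unfolding C_def by simp
qed

end
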